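(* Let $F_2:\mathbb R^d\times\mathbb R^n\to\mathbb R^n$ be locally Lipschitz continuous with $|F_2(z,x)|\lesssim1+|x|+|z|$, and suppose there are $\kappa,D>0$ with $\langle F_2(z,x)-F_2(z,y),x-y\rangle\le D-\kappa|x-y|^2$ for all $x,y\in\mathbb R^n$, $z\in\mathbb R^d$. Let $\varsigma\in\mathcal C(\mathbb R_+,\mathbb R^n)$ with $\varsigma(0)=0$ and $z\in\mathcal C(\mathbb R_+,\mathbb R^d)$. (1) For any $x_0\in\mathbb R^n$ there are unique global solutions to $x(t)=x_0+\int_0^tF_2(z(s),x(s))\,ds+\varsigma_t$ and $y(t)=x_0-\int_0^ty(s)\,ds+\varsigma_t$. On any finite interval $[0,T]$, $|x(t)-y(t)|^2\lesssim\int_0^te^{-\kappa(t-s)}(1+|y(s)|+|z(s)|)^2\,ds$ for all $t\in[0,T]$; in particular $|x|_\infty\lesssim1+|x_0|+|\varsigma|_\infty+|z|_\infty$. (2) If in addition $\varsigma\in\mathcal C^\alpha([0,T],\mathbb R^n)$ for some $\alpha>0$, then $x\in\mathcal C^\alpha([0,T],\mathbb R^n)$ and $|x|_{\mathcal C^\alpha}\lesssim1+|x_0|+|z|_\infty+|\varsigma|_{\mathcal C^\alpha}$.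
   Context: Sup-norms and Hölder seminorms are taken over $[0,T]$. Implicit constants in $\lesssim$ do not depend on $x_0$, $\varsigma$, $z$. *)

theory Defs
  imports "HOL-Analysis.Analysis"
begin

definition loc_lipschitz :: "('a::metric_space \<Rightarrow> 'b::metric_space) \<Rightarrow> bool" where
  "loc_lipschitz f \<longleftrightarrow> (\<forall>p. \<exists>u>0. \<exists>L. L-lipschitz_on (cball p u) f)"

definition is_global_solution ::
  "(real \<Rightarrow> 'x::euclidean_space \<Rightarrow> 'x) \<Rightarrow> 'x \<Rightarrow> (real \<Rightarrow> 'x) \<Rightarrow> (real \<Rightarrow> 'x) \<Rightarrow> bool" where
  "is_global_solution G x0 noise x \<longleftrightarrow>
     continuous_on {0..} x \<and>
     (\<forall>t\<ge>0. (\<lambda>s. G s (x s)) integrable_on {0..t} \<and>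
             x t = x0 + integral {0..t} (\<lambda>s. G s (x s)) + noise t)"

definition sup_norm :: "real \<Rightarrow> (real \<Rightarrow> 'a::real_normed_vector) \<Rightarrow> real" where
  "sup_norm T f = (SUP t\<in>{0..T}. norm (f t))"

definition hoelder_on :: "real \<Rightarrow> real \<Rightarrow> (real \<Rightarrow> 'a::real_normed_vector) \<Rightarrow> bool" where
  "hoelder_on \<alpha> T f \<longleftrightarrow>
     (\<exists>C. \<forall>s\<in>{0..T}. \<forall>t\<in>{0..T}. norm (f t - f s) \<le> C * \<bar>t - s\<bar> powr \<alpha>)"

definition hoelder_seminorm :: "real \<Rightarrow> real \<Rightarrow> (real \<Rightarrow> 'a::real_normed_vector) \<Rightarrow> real" where
  "hoelder_seminorm \<alpha> T f =
     (SUP st\<in>{(s,t). s\<in>{0..T} \<and> t\<in>{0..T} \<and> s \<noteq> t}.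
        norm (f (snd st) - f (fst st)) / \<bar>snd st - fst st\<bar> powr \<alpha>)"

definition hoelder_norm :: "real \<Rightarrow> real \<Rightarrow> (real \<Rightarrow> 'a::real_normed_vector) \<Rightarrow> real" where
  "hoelder_norm \<alpha> T f = sup_norm T f + hoelder_seminorm \<alpha> T f"

end

theory Submission
  imports Defs
begin

lemma loc_lip_cont:
  fixes f :: "'a::metric_space \<Rightarrow> 'b::metric_space"
  assumes "loc_lipschitz f" shows "continuous_on UNIV f"
proof -
  have "continuous (at p) f" for p
  proof -
    obtain u L where u: "u > 0" "L-lipschitz_on (cball p u) f" using assms unfolding loc_lipschitz_def by blast
    have "continuous_on (cball p u) f" using u(2) by (rule lipschitz_on_continuous_on)
    moreover have "p \<in> interior (cball p u)" using u(1) by (meson centre_in_ball interior_maximal ball_subset_cball open_ball subsetD)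
    ultimately show ?thesis using continuous_on_interior by blast
  qed
  then show ?thesis by (simp add: continuous_at_imp_continuous_on)
qed

lemma loc_lip_compact:
  fixes f :: "'a::metric_space \<Rightarrow> 'b::metric_space"
  assumes "loc_lipschitz f" "compact K" shows "\<exists>L. L-lipschitz_on K f"
proof -
  have ll: "local_lipschitz {0::real} K (\<lambda>_. f)"
    unfolding local_lipschitz_def
  proof (intro ballI)
    fix x t assume "x \<in> K" "t \<in> {0::real}"
    obtain u L where u: "u > 0" "L-lipschitz_on (cball x u) f" using assms(1) unfolding loc_lipschitz_def by blast
    then show "\<exists>u>0. \<exists>L. \<forall>t\<in>cball t u \<inter> {0}. L-lipschitz_on (cball x u \<inter> K) f"
      by (meson Int_lower1 lipschitz_on_subset)
  qed
  obtain L where "\<And>t. t \<in> {0::real} \<Longrightarrow> L-lipschitz_on K f"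
    using local_lipschitz_compact_implies_lipschitz[OF ll assms(2)] by auto
  then show ?thesis by auto
qed

lemma energy:
  fixes g :: "real \<Rightarrow> 'a::euclidean_space" and h :: "real \<Rightarrow> real"
  assumes tau: "0 \<le> \<tau>" and gc: "continuous_on {0..\<tau>} g" and hc: "continuous_on {0..\<tau>} h"
   and ineq: "\<And>t. t \<in> {0..\<tau>} \<Longrightarrow> 2 * inner (g t) (e0 + integral {0..t} g) \<le> - a * (norm (e0 + integral {0..t} g))\<^sup>2 + h t"
   and t: "t \<in> {0..\<tau>}"
  shows "exp (a * t) * (norm (e0 + integral {0..t} g))\<^sup>2 \<le> (norm e0)\<^sup>2 + integral {0..t} (\<lambda>s. exp (a * s) * h s)"
proof -
  define E where "E t = e0 + integral {0..t} g" for t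
  define k where "k s = exp (a * s) * h s" for s
  define \<Phi> where "\<Phi> t = exp (a * t) * inner (E t) (E t) - integral {0..t} k" for t
  have kc: "continuous_on {0..\<tau>} k" unfolding k_def by (intro continuous_intros hc)
  have dE: "(E has_vector_derivative g s) (at s within {0..\<tau>})" if "s \<in> {0..\<tau>}" for s
    unfolding E_def using integral_has_vector_derivative[OF gc that]
    by (auto intro!: derivative_eq_intros)
  have dK: "((\<lambda>u. integral {0..u} k) has_real_derivative k s) (at s within {0..\<tau>})" if "s \<in> {0..\<tau>}" for s
    using integral_has_vector_derivative[OF kc that]
    by (simp add: has_real_derivative_iff_has_vector_derivative)
  have dN: "((\<lambda>t. inner (E t) (E t)) has_real_derivative 2 * inner (g s) (E s)) (at s within {0..\<tau>})"
    if "s \<in> {0..\<tau>}" for s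
  proof -
    have "(E has_derivative (\<lambda>x. x *\<^sub>R g s)) (at s within {0..\<tau>})"
      using dE[OF that] by (simp add: has_vector_derivative_def)
    then have "((\<lambda>t. inner (E t) (E t)) has_derivative (\<lambda>x. inner (E s) (x *\<^sub>R g s) + inner (x *\<^sub>R g s) (E s))) (at s within {0..\<tau>})"
      by (intro has_derivative_inner)
    then show ?thesis
      by (rule has_derivative_imp_has_field_derivative) (simp add: inner_commute algebra_simps)
  qed
  have d\<Phi>: "(\<Phi> has_real_derivative exp (a * s) * (a * inner (E s) (E s) + 2 * inner (g s) (E s)) - k s) (at s within {0..\<tau>})"
    if "s \<in> {0..\<tau>}" for s
  proof -
    have e: "((\<lambda>t. exp (a * t)) has_real_derivative exp (a * s) * a) (at s within {0..\<tau>})"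
      by (auto intro!: derivative_eq_intros)
    have "(\<Phi> has_real_derivative (exp (a * s) * a * inner (E s) (E s) + 2 * inner (g s) (E s) * exp (a * s)) - k s) (at s within {0..\<tau>})"
      unfolding \<Phi>_def by (intro DERIV_diff DERIV_mult e dN[OF that] dK[OF that])
    then show ?thesis by (simp add: algebra_simps)
  qed
  have neg: "exp (a * s) * (a * inner (E s) (E s) + 2 * inner (g s) (E s)) - k s \<le> 0" if "s \<in> {0..\<tau>}" for s
  proof -
    have "a * inner (E s) (E s) + 2 * inner (g s) (E s) \<le> h s"
      using ineq[OF that] unfolding E_def by (simp add: power2_norm_eq_inner)
    then have "exp (a * s) * (a * inner (E s) (E s) + 2 * inner (g s) (E s)) \<le> exp (a * s) * h s"
      by (intro mult_left_mono) auto
    then show ?thesis unfolding k_def by simp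
  qed
  have "\<Phi> t \<le> \<Phi> 0"
  proof (rule DERIV_nonpos_imp_decreasing_open[of 0 t \<Phi>])
    show "0 \<le> t" using t by simp
    fix x assume x: "0 < x" "x < t"
    then have xi: "x \<in> {0..\<tau>}" using t by auto
    have "at x within {0..\<tau>} = at x" using x t by (intro at_within_Icc_at) auto
    then show "\<exists>y. (\<Phi> has_real_derivative y) (at x) \<and> y \<le> 0"
      using d\<Phi>[OF xi] neg[OF xi] by metis
  next
    have "continuous_on {0..\<tau>} \<Phi>"
      using d\<Phi> DERIV_continuous by (auto simp: continuous_on_eq_continuous_within) blast
    then show "continuous_on {0..t} \<Phi>" by (rule continuous_on_subset) (use t in auto)
  qed
  then show ?thesis
    unfolding \<Phi>_def E_def k_def by (simp add: power2_norm_eq_inner)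
qed


lemma exp_integral:
  fixes L u :: real
  assumes "0 < L" "0 \<le> u"
  shows "((\<lambda>s. exp (2 * L * s)) has_integral (exp (2 * L * u) - 1) / (2 * L)) {0..u}"
proof -
  have "((\<lambda>s. exp (2 * L * s)) has_integral (exp (2 * L * u) / (2 * L) - exp (2 * L * 0) / (2 * L))) {0..u}"
    using assms by (intro fundamental_theorem_of_calculus)
       (auto intro!: derivative_eq_intros simp: has_real_derivative_iff_has_vector_derivative[symmetric])
  then show ?thesis by (simp add: diff_divide_distrib)
qed

lemma exist_lip:
  fixes Fh :: "real \<Rightarrow> 'a::euclidean_space \<Rightarrow> 'a"
  assumes T: "0 \<le> T" and L: "0 < L"
   and cont: "\<And>x. continuous_on {0..T} x \<Longrightarrow> continuous_on {0..T} (\<lambda>s. Fh s (x s))"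
   and lip: "\<And>s v w. s \<in> {0..T} \<Longrightarrow> norm (Fh s v - Fh s w) \<le> L * norm (v - w)"
   and sc: "continuous_on {0..T} \<sigma>"
  shows "\<exists>x. continuous_on {0..T} x \<and> (\<forall>t\<in>{0..T}. x t = x0 + integral {0..t} (\<lambda>s. Fh s (x s)) + \<sigma> t)"
proof -
  define c where "c t = max 0 (min T t)" for t :: real
  have cc: "continuous_on UNIV c" unfolding c_def by (intro continuous_intros)
  have cin: "c t \<in> {0..T}" for t using T unfolding c_def by auto
  have cid: "t \<in> {0..T} \<Longrightarrow> c t = t" for t unfolding c_def by auto
  define W where "W g s = exp (2 * L * s) *\<^sub>R g s" for g :: "real \<Rightarrow> 'a" and s
  define \<Phi> where "\<Phi> g u = exp (-2 * L * u) *\<^sub>R (x0 + integral {0..u} (\<lambda>s. Fh s (W g s)) + \<sigma> u)" for g u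
  have Wc: "continuous_on {0..T} (W g)" if "continuous_on {0..T} g" for g
    unfolding W_def by (intro continuous_intros that)
  have Ic: "continuous_on {0..T} (\<lambda>s. Fh s (W g s))" if "continuous_on {0..T} g" for g
    by (rule cont[OF Wc[OF that]])
  have \<Phi>c: "continuous_on {0..T} (\<Phi> g)" if "continuous_on {0..T} g" for g
  proof -
    have "continuous_on {0..T} (\<lambda>u. integral {0..u} (\<lambda>s. Fh s (W g s)))"
      by (rule continuous_on_vector_derivative, rule integral_has_vector_derivative[OF Ic[OF that]])
    then show ?thesis unfolding \<Phi>_def by (intro continuous_intros sc)
  qed
  have inB: "(\<lambda>t. \<Phi> g (c t)) \<in> bcontfun" if "continuous_on {0..T} g" for g
  proof -
    have 1: "continuous_on UNIV (\<lambda>t. \<Phi> g (c t))"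
      by (rule continuous_on_compose2[OF \<Phi>c[OF that] cc]) (use cin in auto)
    have "compact (\<Phi> g ` {0..T})" by (intro compact_continuous_image \<Phi>c that) auto
    then have "bounded (\<Phi> g ` {0..T})" by (rule compact_imp_bounded)
    moreover have "range (\<lambda>t. \<Phi> g (c t)) \<subseteq> \<Phi> g ` {0..T}" using cin by auto
    ultimately have "bounded (range (\<lambda>t. \<Phi> g (c t)))" by (rule bounded_subset)
    with 1 show ?thesis unfolding bcontfun_def by auto
  qed
  define \<Psi> where "\<Psi> g = Bcontfun (\<lambda>t. \<Phi> (apply_bcontfun g) (c t))" for g :: "real \<Rightarrow>\<^sub>C 'a"
  have \<Psi>a: "apply_bcontfun (\<Psi> g) t = \<Phi> (apply_bcontfun g) (c t)" for g t
    unfolding \<Psi>_def using inB[of "apply_bcontfun g"] by (simp add: Bcontfun_inverse)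
  have contr: "dist (\<Psi> g1) (\<Psi> g2) \<le> 1/2 * dist g1 g2" for g1 g2
  proof (rule dist_bound)
    fix t
    define u where "u = c t"
    have u: "u \<in> {0..T}" unfolding u_def by (rule cin)
    define d where "d = dist g1 g2"
    let ?f = "\<lambda>s. Fh s (W (apply_bcontfun g1) s) - Fh s (W (apply_bcontfun g2) s)"
    have i1: "(\<lambda>s. Fh s (W (apply_bcontfun g1) s)) integrable_on {0..u}"
      by (rule integrable_continuous_real, rule continuous_on_subset[OF Ic]) (use u in auto)
    have i2: "(\<lambda>s. Fh s (W (apply_bcontfun g2) s)) integrable_on {0..u}"
      by (rule integrable_continuous_real, rule continuous_on_subset[OF Ic]) (use u in auto)
    have ei: "((\<lambda>s. L * d * exp (2 * L * s)) has_integral L * d * ((exp (2 * L * u) - 1) / (2 * L))) {0..u}"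
      by (intro has_integral_mult_right exp_integral L) (use u in auto)
    have "norm (integral {0..u} ?f) \<le> integral {0..u} (\<lambda>s. L * d * exp (2 * L * s))"
    proof (rule integral_norm_bound_integral)
      show "?f integrable_on {0..u}" by (rule integrable_diff[OF i1 i2])
      show "(\<lambda>s. L * d * exp (2 * L * s)) integrable_on {0..u}" using ei by blast
      fix s assume s: "s \<in> {0..u}"
      then have sT: "s \<in> {0..T}" using u by auto
      have "norm (?f s) \<le> L * norm (W (apply_bcontfun g1) s - W (apply_bcontfun g2) s)"
        by (rule lip[OF sT])
      also have "norm (W (apply_bcontfun g1) s - W (apply_bcontfun g2) s) = exp (2 * L * s) * dist (apply_bcontfun g1 s) (apply_bcontfun g2 s)"
        unfolding W_def by (simp add: dist_norm scaleR_diff_right[symmetric])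
      also have "dist (apply_bcontfun g1 s) (apply_bcontfun g2 s) \<le> d" unfolding d_def by (rule dist_bounded)
      finally show "norm (?f s) \<le> L * d * exp (2 * L * s)"
        using L by (simp add: mult_left_mono mult_ac)
    qed
    also have "\<dots> = L * d * ((exp (2 * L * u) - 1) / (2 * L))" using ei by (rule integral_unique)
    finally have nb: "norm (integral {0..u} ?f) \<le> L * d * ((exp (2 * L * u) - 1) / (2 * L))" .
    have "dist (\<Psi> g1 t) (\<Psi> g2 t) = norm (\<Phi> g1 u - \<Phi> g2 u)" unfolding \<Psi>a u_def dist_norm ..
    also have "\<Phi> g1 u - \<Phi> g2 u = exp (-2 * L * u) *\<^sub>R integral {0..u} ?f"
      unfolding \<Phi>_def by (simp add: integral_diff[OF i1 i2] scaleR_diff_right[symmetric])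
    also have "norm (exp (-2 * L * u) *\<^sub>R integral {0..u} ?f) = exp (-2 * L * u) * norm (integral {0..u} ?f)"
      by simp
    also have "\<dots> \<le> exp (-2 * L * u) * (L * d * ((exp (2 * L * u) - 1) / (2 * L)))"
      by (rule mult_left_mono[OF nb]) simp
    also have "\<dots> = d/2 * (1 - exp (-2 * L * u))"
      using L by (simp add: field_simps exp_minus exp_add[symmetric])
    also have "\<dots> \<le> 1/2 * d"
      unfolding d_def by (simp add: mult_left_le)
    finally show "dist (\<Psi> g1 t) (\<Psi> g2 t) \<le> 1/2 * dist g1 g2" unfolding d_def .
  qed
  obtain G where G: "\<Psi> G = G" using banach_fix_type[of "1/2" \<Psi>] contr by auto
  define x where "x t = exp (2 * L * t) *\<^sub>R apply_bcontfun G t" for t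
  have xW: "x = W (apply_bcontfun G)" unfolding x_def W_def by auto
  show ?thesis
  proof (intro exI conjI ballI)
    show "continuous_on {0..T} x" unfolding x_def by (intro continuous_intros continuous_on_apply_bcontfun)
    fix t assume t: "t \<in> {0..T}"
    have "apply_bcontfun G t = \<Phi> (apply_bcontfun G) t" using \<Psi>a[of G t] G cid[OF t] by simp
    then have "x t = exp (2 * L * t) *\<^sub>R \<Phi> (apply_bcontfun G) t" unfolding x_def by simp
    also have "\<dots> = x0 + integral {0..t} (\<lambda>s. Fh s (x s)) + \<sigma> t"
      unfolding \<Phi>_def xW by (simp add: exp_minus exp_add[symmetric])
    finally show "x t = x0 + integral {0..t} (\<lambda>s. Fh s (x s)) + \<sigma> t" .
  qed
qed


lemma F_cont_comp:
  fixes F :: "'z::euclidean_space \<Rightarrow> 'x::euclidean_space \<Rightarrow> 'x"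
  assumes lip: "loc_lipschitz (\<lambda>(z, x). F z x)"
    and zc: "continuous_on S z" and xc: "continuous_on S x"
  shows "continuous_on S (\<lambda>s. F (z s) (x s))"
proof -
  have Fc: "continuous_on UNIV (\<lambda>(z, x). F z x)" by (rule loc_lip_cont[OF lip])
  have "continuous_on S (\<lambda>s. (\<lambda>(z, x). F z x) (z s, x s))"
    by (rule continuous_on_compose2[OF Fc]) (auto intro!: continuous_intros zc xc)
  then show ?thesis by simp
qed

lemma bounded_on_compact:
  fixes x :: "real \<Rightarrow> 'a::real_normed_vector" and a b :: real
  assumes "continuous_on {a..b} x"
  obtains R where "\<And>s. s \<in> {a..b} \<Longrightarrow> norm (x s) \<le> R"
proof -
  have "compact (x ` {a..b})" by (intro compact_continuous_image assms) auto
  then have "bounded (x ` {a..b})" by (rule compact_imp_bounded)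
  then obtain R where "\<forall>y\<in>x ` {a..b}. norm y \<le> R" unfolding bounded_iff by blast
  then show ?thesis using that by blast
qed

lemma uniq:
  fixes F :: "'z::euclidean_space \<Rightarrow> 'x::euclidean_space \<Rightarrow> 'x"
    and T :: real and z :: "real \<Rightarrow> 'z" and x1 x2 \<sigma> :: "real \<Rightarrow> 'x"
  assumes lip: "loc_lipschitz (\<lambda>(z, x). F z x)" and T: "0 \<le> T"
   and zc: "continuous_on {0..T} z" and c1: "continuous_on {0..T} x1" and c2: "continuous_on {0..T} x2"
   and e1: "\<forall>t\<in>{0..T}. x1 t = x0 + integral {0..t} (\<lambda>s. F (z s) (x1 s)) + \<sigma> t"
   and e2: "\<forall>t\<in>{0..T}. x2 t = x0 + integral {0..t} (\<lambda>s. F (z s) (x2 s)) + \<sigma> t"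
   and t: "t \<in> {0..T}"
  shows "x1 t = x2 t"
proof -
  obtain R1 where R1: "\<And>s. s \<in> {0..T} \<Longrightarrow> norm (x1 s) \<le> R1" using bounded_on_compact[OF c1] by blast
  obtain R2 where R2: "\<And>s. s \<in> {0..T} \<Longrightarrow> norm (x2 s) \<le> R2" using bounded_on_compact[OF c2] by blast
  define R where "R = max R1 R2"
  define K where "K = z ` {0..T} \<times> cball (0::'x) R"
  have "compact K" unfolding K_def
    by (intro compact_Times compact_continuous_image zc compact_cball) auto
  then obtain L where L: "L-lipschitz_on K (\<lambda>(z, x). F z x)" using loc_lip_compact[OF lip] by blast
  have L0: "0 \<le> L" using L by (rule lipschitz_on_nonneg)
  define g where "g s = F (z s) (x1 s) - F (z s) (x2 s)" for s
  have f1c: "continuous_on {0..T} (\<lambda>s. F (z s) (x1 s))" by (rule F_cont_comp[OF lip zc c1])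
  have f2c: "continuous_on {0..T} (\<lambda>s. F (z s) (x2 s))" by (rule F_cont_comp[OF lip zc c2])
  have gc: "continuous_on {0..T} g" unfolding g_def by (intro continuous_intros f1c f2c)
  have erep: "x1 s - x2 s = 0 + integral {0..s} g" if s: "s \<in> {0..T}" for s
  proof -
    have i1: "(\<lambda>s. F (z s) (x1 s)) integrable_on {0..s}"
      by (rule integrable_continuous_real, rule continuous_on_subset[OF f1c]) (use s in auto)
    have i2: "(\<lambda>s. F (z s) (x2 s)) integrable_on {0..s}"
      by (rule integrable_continuous_real, rule continuous_on_subset[OF f2c]) (use s in auto)
    show ?thesis using e1 e2 s unfolding g_def by (simp add: integral_diff[OF i1 i2])
  qed
  have gb: "norm (g s) \<le> L * norm (x1 s - x2 s)" if s: "s \<in> {0..T}" for s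
  proof -
    have "(z s, x1 s) \<in> K" "(z s, x2 s) \<in> K" unfolding K_def R_def using s R1[OF s] R2[OF s] by auto
    then have "dist ((\<lambda>(z, x). F z x) (z s, x1 s)) ((\<lambda>(z, x). F z x) (z s, x2 s)) \<le> L * dist (z s, x1 s) (z s, x2 s)"
      by (rule lipschitz_onD[OF L])
    then show ?thesis unfolding g_def by (simp add: dist_norm dist_Pair_Pair)
  qed
  have "exp ((-2*L) * t) * (norm (0 + integral {0..t} g))\<^sup>2 \<le> (norm (0::'x))\<^sup>2 + integral {0..t} (\<lambda>s. exp ((-2*L) * s) * 0)"
  proof (rule energy[OF T gc _ _ t])
    show "continuous_on {0..T} (\<lambda>s. 0::real)" by simp
    fix s assume s: "s \<in> {0..T}"
    have "2 * inner (g s) (0 + integral {0..s} g) \<le> 2 * (norm (g s) * norm (x1 s - x2 s))"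
      using erep[OF s] Cauchy_Schwarz_ineq2[of "g s" "x1 s - x2 s"] by simp
    also have "\<dots> \<le> 2 * (L * norm (x1 s - x2 s) * norm (x1 s - x2 s))"
      using gb[OF s] by (simp add: mult_right_mono)
    finally show "2 * inner (g s) (0 + integral {0..s} g) \<le> - (-2*L) * (norm (0 + integral {0..s} g))\<^sup>2 + 0"
      using erep[OF s] by (simp add: power2_eq_square)
  qed
  then have "(norm (x1 t - x2 t))\<^sup>2 \<le> 0" using erep[OF t] by (simp add: mult_le_0_iff)
  then show ?thesis by simp
qed


lemma young:
  fixes k b r :: real
  assumes "0 < k" shows "2 * b * r \<le> k * r\<^sup>2 + b\<^sup>2 / k"
proof -
  have "0 \<le> (k * r - b)\<^sup>2 / k" using assms by simp
  also have "(k * r - b)\<^sup>2 / k = k * r\<^sup>2 + b\<^sup>2 / k - 2 * b * r"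
    using assms by (simp add: field_simps power2_eq_square)
  finally show ?thesis by simp
qed

lemma sqrt3_le:
  fixes u A B :: real
  assumes "0 \<le> A" "0 \<le> B" "0 \<le> C" "0 \<le> u" "u\<^sup>2 \<le> A\<^sup>2 + B\<^sup>2 + C\<^sup>2"
  shows "u \<le> A + B + C"
proof (rule power2_le_imp_le)
  have "A\<^sup>2 + B\<^sup>2 + C\<^sup>2 \<le> (A + B + C)\<^sup>2" using assms by (simp add: power2_eq_square algebra_simps)
  then show "u\<^sup>2 \<le> (A + B + C)\<^sup>2" using assms(5) by linarith
  show "0 \<le> A + B + C" using assms by simp
qed

lemma apriori:
  fixes F :: "'z::euclidean_space \<Rightarrow> 'x::euclidean_space \<Rightarrow> 'x"
    and \<tau> \<kappa> D c S\<sigma> Sz :: real and z :: "real \<Rightarrow> 'z" and x \<sigma> :: "real \<Rightarrow> 'x"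
  assumes lip: "loc_lipschitz (\<lambda>(z, x). F z x)"
   and growth: "\<And>z x. norm (F z x) \<le> c * (1 + norm x + norm z)" and c0: "0 \<le> c"
   and kappa: "\<kappa> > 0" and D0: "0 \<le> D"
   and dissip: "\<And>z x y. inner (F z x - F z y) (x - y) \<le> D - \<kappa> * (norm (x - y))\<^sup>2"
   and tau: "0 \<le> \<tau>" and zc: "continuous_on {0..\<tau>} z" and xc: "continuous_on {0..\<tau>} x"
   and sc: "continuous_on {0..\<tau>} \<sigma>"
   and eq: "\<forall>t\<in>{0..\<tau>}. x t = x0 + integral {0..t} (\<lambda>s. F (z s) (x s)) + \<sigma> t"
   and bs: "\<forall>s\<in>{0..\<tau>}. norm (\<sigma> s) \<le> S\<sigma>" and bz: "\<forall>s\<in>{0..\<tau>}. norm (z s) \<le> Sz"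
   and t: "t \<in> {0..\<tau>}"
  shows "norm (x t) \<le> (1 + sqrt (2 * \<tau> * D) + c * sqrt (\<tau> / (2 * \<kappa>))) * (1 + norm x0 + S\<sigma> + Sz)"
proof -
  have S0: "0 \<le> S\<sigma>" "0 \<le> Sz" using bs bz tau by (auto intro: order_trans[OF norm_ge_zero])
  define g where "g s = F (z s) (x s)" for s
  define h where "h s = 2 * D + (norm (F (z s) (\<sigma> s)))\<^sup>2 / (2 * \<kappa>)" for s
  define Q where "Q = 1 + S\<sigma> + Sz"
  define H where "H = 2 * D + (c * Q)\<^sup>2 / (2 * \<kappa>)"
  have gc: "continuous_on {0..\<tau>} g" unfolding g_def by (rule F_cont_comp[OF lip zc xc])
  have hc: "continuous_on {0..\<tau>} h" unfolding h_def
    using kappa by (intro continuous_intros F_cont_comp[OF lip zc sc]) auto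
  have erep: "x s - \<sigma> s = x0 + integral {0..s} g" if "s \<in> {0..\<tau>}" for s
    using eq that unfolding g_def by auto
  have en: "exp (0 * t) * (norm (x0 + integral {0..t} g))\<^sup>2 \<le> (norm x0)\<^sup>2 + integral {0..t} (\<lambda>s. exp (0 * s) * h s)"
  proof (rule energy[OF tau gc hc _ t])
    fix s assume s: "s \<in> {0..\<tau>}"
    define w where "w = x s - \<sigma> s"
    define b where "b = norm (F (z s) (\<sigma> s))"
    have "inner (g s) w = inner (F (z s) (x s) - F (z s) (\<sigma> s)) (x s - \<sigma> s) + inner (F (z s) (\<sigma> s)) w"
      unfolding g_def w_def by (simp add: inner_diff_left)
    also have "\<dots> \<le> D - \<kappa> * (norm w)\<^sup>2 + b * norm w"
      using dissip[of "z s" "x s" "\<sigma> s"] Cauchy_Schwarz_ineq2[of "F (z s) (\<sigma> s)" w]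
      unfolding w_def b_def by linarith
    finally have 1: "2 * inner (g s) w \<le> 2 * D - 2 * \<kappa> * (norm w)\<^sup>2 + 2 * b * norm w" by simp
    have "2 * b * norm w \<le> (2 * \<kappa>) * (norm w)\<^sup>2 + b\<^sup>2 / (2 * \<kappa>)"
      by (rule young) (use kappa in simp)
    with 1 have "2 * inner (g s) w \<le> h s" unfolding h_def b_def by simp
    then show "2 * inner (g s) (x0 + integral {0..s} g) \<le> - 0 * (norm (x0 + integral {0..s} g))\<^sup>2 + h s"
      using erep[OF s] unfolding w_def by simp
  qed
  have hH: "h s \<le> H" if s: "s \<in> {0..\<tau>}" for s
  proof -
    have "norm (F (z s) (\<sigma> s)) \<le> c * (1 + norm (\<sigma> s) + norm (z s))" by (rule growth)
    also have "\<dots> \<le> c * Q"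
    proof -
      have "norm (\<sigma> s) \<le> S\<sigma>" "norm (z s) \<le> Sz" using bs bz s by auto
      then show ?thesis unfolding Q_def using c0 by (intro mult_left_mono) linarith+
    qed
    finally have "(norm (F (z s) (\<sigma> s)))\<^sup>2 \<le> (c * Q)\<^sup>2" by (intro power_mono) auto
    then show ?thesis unfolding h_def H_def using kappa by (simp add: divide_right_mono)
  qed
  have H0: "0 \<le> H" unfolding H_def using D0 kappa by simp
  have "integral {0..t} h \<le> integral {0..t} (\<lambda>s. H)"
    by (rule integral_le) (use t hH in \<open>auto intro!: integrable_continuous_real continuous_on_subset[OF hc]\<close>)
  also have "\<dots> = t * H" using t by simp
  also have "\<dots> \<le> \<tau> * H" using t H0 by (intro mult_right_mono) auto
  finally have ih: "integral {0..t} h \<le> \<tau> * H" .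
  have w2: "(norm (x t - \<sigma> t))\<^sup>2 \<le> (norm x0)\<^sup>2 + \<tau> * H"
    using en ih erep[OF t] by simp
  define A where "A = sqrt (2 * \<tau> * D)"
  define Bc where "Bc = c * sqrt (\<tau> / (2 * \<kappa>))"
  have A0: "0 \<le> A" unfolding A_def using tau D0 by simp
  have Bc0: "0 \<le> Bc" unfolding Bc_def using tau kappa c0 by simp
  have Q1: "1 \<le> Q" unfolding Q_def using S0 by simp
  have tH: "\<tau> * H = A\<^sup>2 + (Bc * Q)\<^sup>2"
    unfolding A_def Bc_def H_def using tau D0 kappa
    by (simp add: power_mult_distrib real_sqrt_pow2 field_simps)
  have "(norm (x t - \<sigma> t))\<^sup>2 \<le> (norm x0)\<^sup>2 + A\<^sup>2 + (Bc * Q)\<^sup>2" using w2 tH by linarith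
  moreover have "0 \<le> Bc * Q" using Bc0 Q1 by simp
  ultimately have "norm (x t - \<sigma> t) \<le> norm x0 + A + Bc * Q"
    using sqrt3_le[of "norm x0" A "Bc * Q" "norm (x t - \<sigma> t)"] A0 by simp
  moreover have "norm (x t) \<le> norm (\<sigma> t) + norm (x t - \<sigma> t)"
    using norm_triangle_ineq[of "\<sigma> t" "x t - \<sigma> t"] by simp
  moreover have "norm (\<sigma> t) \<le> S\<sigma>" using bs t by auto
  ultimately have 1: "norm (x t) \<le> S\<sigma> + norm x0 + A + Bc * Q" by linarith
  define P where "P = 1 + norm x0 + S\<sigma> + Sz"
  have P1: "1 \<le> P" "Q \<le> P" unfolding P_def Q_def using S0 by auto
  have "A \<le> A * P" using A0 P1 by (simp add: mult_le_cancel_left1)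
  moreover have "Bc * Q \<le> Bc * P" using Bc0 P1 by (simp add: mult_left_mono)
  moreover have "S\<sigma> + norm x0 \<le> P" unfolding P_def using S0 by simp
  ultimately have "S\<sigma> + norm x0 + A + Bc * Q \<le> (1 + A + Bc) * P" by (simp add: algebra_simps)
  with 1 show ?thesis unfolding P_def A_def Bc_def by simp
qed


lemma exist_T:
  fixes F :: "'z::euclidean_space \<Rightarrow> 'x::euclidean_space \<Rightarrow> 'x"
    and T \<kappa> D c :: real and z :: "real \<Rightarrow> 'z" and \<sigma> :: "real \<Rightarrow> 'x"
  assumes lip: "loc_lipschitz (\<lambda>(z, x). F z x)"
   and growth: "\<And>z x. norm (F z x) \<le> c * (1 + norm x + norm z)" and c0: "0 \<le> c"
   and kappa: "\<kappa> > 0" and D0: "0 \<le> D"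
   and dissip: "\<And>z x y. inner (F z x - F z y) (x - y) \<le> D - \<kappa> * (norm (x - y))\<^sup>2"
   and T: "0 \<le> T" and zc: "continuous_on {0..T} z" and sc: "continuous_on {0..T} \<sigma>"
   and s0: "\<sigma> 0 = 0"
  shows "\<exists>x. continuous_on {0..T} x \<and> (\<forall>t\<in>{0..T}. x t = x0 + integral {0..t} (\<lambda>s. F (z s) (x s)) + \<sigma> t)"
proof -
  obtain S\<sigma> where bs: "\<And>s. s \<in> {0..T} \<Longrightarrow> norm (\<sigma> s) \<le> S\<sigma>" using bounded_on_compact[OF sc] by blast
  obtain Sz where bz: "\<And>s. s \<in> {0..T} \<Longrightarrow> norm (z s) \<le> Sz" using bounded_on_compact[OF zc] by blast
  have S0: "0 \<le> S\<sigma>" "0 \<le> Sz" using bs[of 0] bz[of 0] T by (auto intro: order_trans[OF norm_ge_zero])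
  define C1 where "C1 = 1 + sqrt (2 * T * D) + c * sqrt (T / (2 * \<kappa>))"
  have C11: "1 \<le> C1" unfolding C1_def using T D0 kappa c0 by simp
  define B where "B = C1 * (1 + norm x0 + S\<sigma> + Sz)"
  have x0B: "norm x0 \<le> B"
  proof -
    have "norm x0 \<le> 1 * (1 + norm x0 + S\<sigma> + Sz)" using S0 by simp
    also have "\<dots> \<le> B" unfolding B_def using C11 S0 by (intro mult_right_mono) auto
    finally show ?thesis .
  qed
  define R where "R = B + 1"
  have R0: "0 < R" unfolding R_def using x0B using norm_ge_zero[of x0] by linarith
  define P where "P v = closest_point (cball (0::'x) R) v" for v
  have Pin: "P v \<in> cball 0 R" for v unfolding P_def
    by (rule closest_point_in_set) (use R0 in auto)
  have Pid: "norm v \<le> R \<Longrightarrow> P v = v" for v unfolding P_def by (rule closest_point_self) simp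
  have Plip: "dist (P v) (P w) \<le> dist v w" for v w unfolding P_def
    by (rule closest_point_lipschitz) (use R0 in auto)
  have Pc: "continuous_on UNIV P" unfolding P_def
    by (rule continuous_on_closest_point) (use R0 in auto)
  define K where "K = z ` {0..T} \<times> cball (0::'x) R"
  have "compact K" unfolding K_def
    by (intro compact_Times compact_continuous_image zc compact_cball) auto
  then obtain L where L: "L-lipschitz_on K (\<lambda>(z, x). F z x)" using loc_lip_compact[OF lip] by blast
  have L0: "0 \<le> L" using L by (rule lipschitz_on_nonneg)
  define Fh where "Fh s v = F (z s) (P v)" for s v
  have "\<exists>x. continuous_on {0..T} x \<and> (\<forall>t\<in>{0..T}. x t = x0 + integral {0..t} (\<lambda>s. Fh s (x s)) + \<sigma> t)"
  proof (rule exist_lip[OF T _ _ _ sc])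
    show "0 < L + 1" using L0 by simp
    fix x :: "real \<Rightarrow> 'x" assume "continuous_on {0..T} x"
    then have "continuous_on {0..T} (\<lambda>s. P (x s))"
      by (intro continuous_on_compose2[OF Pc]) auto
    then show "continuous_on {0..T} (\<lambda>s. Fh s (x s))" unfolding Fh_def
      by (rule F_cont_comp[OF lip zc])
  next
    fix s v w assume s: "s \<in> {0..T}"
    have "(z s, P v) \<in> K" "(z s, P w) \<in> K" unfolding K_def using s Pin by auto
    then have "dist ((\<lambda>(z, x). F z x) (z s, P v)) ((\<lambda>(z, x). F z x) (z s, P w)) \<le> L * dist (z s, P v) (z s, P w)"
      by (rule lipschitz_onD[OF L])
    then have "norm (Fh s v - Fh s w) \<le> L * dist (P v) (P w)" unfolding Fh_def by (simp add: dist_norm dist_Pair_Pair)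
    also have "\<dots> \<le> L * dist v w" using Plip L0 by (intro mult_left_mono) auto
    also have "\<dots> \<le> (L + 1) * norm (v - w)" by (simp add: dist_norm mult_right_mono)
    finally show "norm (Fh s v - Fh s w) \<le> (L + 1) * norm (v - w)" .
  qed
  then obtain xR where xRc: "continuous_on {0..T} xR"
    and xRe: "\<forall>t\<in>{0..T}. xR t = x0 + integral {0..t} (\<lambda>s. Fh s (xR s)) + \<sigma> t" by blast
  have solve: "\<forall>t\<in>{0..\<tau>}. xR t = x0 + integral {0..t} (\<lambda>s. F (z s) (xR s)) + \<sigma> t"
    if "\<tau> \<le> T" "\<forall>s\<in>{0..\<tau>}. norm (xR s) \<le> R" for \<tau>
  proof
    fix t assume t: "t \<in> {0..\<tau>}"
    have "integral {0..t} (\<lambda>s. Fh s (xR s)) = integral {0..t} (\<lambda>s. F (z s) (xR s))"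
      by (rule integral_cong) (use that t in \<open>auto simp: Fh_def Pid\<close>)
    then show "xR t = x0 + integral {0..t} (\<lambda>s. F (z s) (xR s)) + \<sigma> t" using xRe t that by auto
  qed
  have nR: "\<forall>t\<in>{0..T}. norm (xR t) \<le> R"
  proof (rule ccontr)
    assume "\<not> ?thesis"
    then obtain t1 where t1: "t1 \<in> {0..T}" "R < norm (xR t1)" by force
    define S where "S = {0..T} \<inter> (\<lambda>t. norm (xR t)) -` {R..}"
    have Sc: "closed S" unfolding S_def
      by (intro continuous_closed_preimage continuous_intros xRc)
    have Sne: "S \<noteq> {}" using t1 unfolding S_def by auto
    have Sb: "bdd_below S" unfolding S_def by (rule bdd_belowI[of _ 0]) auto
    define \<tau> where "\<tau> = Inf S"
    have \<tau>S: "\<tau> \<in> S" unfolding \<tau>_def by (rule closed_contains_Inf[OF Sne Sb Sc])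
    then have \<tau>T: "0 \<le> \<tau>" "\<tau> \<le> T" and \<tau>R: "R \<le> norm (xR \<tau>)" unfolding S_def by auto
    have below: "norm (xR s) < R" if "s \<in> {0..<\<tau>}" for s
    proof (rule ccontr)
      assume "\<not> norm (xR s) < R"
      then have "s \<in> S" unfolding S_def using that \<tau>T by auto
      then have "\<tau> \<le> s" unfolding \<tau>_def using Sb by (rule cInf_lower)
      then show False using that by auto
    qed
    have x00: "xR 0 = x0" using xRe T s0 by auto
    have "\<tau> \<noteq> 0" using \<tau>R x00 x0B unfolding R_def by auto
    then have \<tau>0: "0 < \<tau>" using \<tau>T by simp
    define A where "A = {0..\<tau>} \<inter> (\<lambda>t. norm (xR t)) -` {..R}"
    have "continuous_on {0..\<tau>} xR" by (rule continuous_on_subset[OF xRc]) (use \<tau>T in auto)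
    then have Ac: "closed A" unfolding A_def
      by (intro continuous_closed_preimage continuous_intros)
    have "{0..<\<tau>} \<subseteq> A" unfolding A_def using below by fastforce
    then have "closure {0..<\<tau>} \<subseteq> A" using Ac by (rule closure_minimal)
    then have allR: "\<forall>s\<in>{0..\<tau>}. norm (xR s) \<le> R" using \<tau>0 unfolding A_def by auto
    have "norm (xR \<tau>) \<le> (1 + sqrt (2 * \<tau> * D) + c * sqrt (\<tau> / (2 * \<kappa>))) * (1 + norm x0 + S\<sigma> + Sz)"
    proof (rule apriori[OF lip growth c0 kappa D0 dissip])
      show "0 \<le> \<tau>" by fact
      show "continuous_on {0..\<tau>} z" by (rule continuous_on_subset[OF zc]) (use \<tau>T in auto)
      show "continuous_on {0..\<tau>} xR" by fact
      show "continuous_on {0..\<tau>} \<sigma>" by (rule continuous_on_subset[OF sc]) (use \<tau>T in auto)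
      show "\<forall>t\<in>{0..\<tau>}. xR t = x0 + integral {0..t} (\<lambda>s. F (z s) (xR s)) + \<sigma> t"
        by (rule solve[OF \<tau>T(2) allR])
      show "\<forall>s\<in>{0..\<tau>}. norm (\<sigma> s) \<le> S\<sigma>" using bs \<tau>T by auto
      show "\<forall>s\<in>{0..\<tau>}. norm (z s) \<le> Sz" using bz \<tau>T by auto
      show "\<tau> \<in> {0..\<tau>}" using \<tau>0 by auto
    qed
    also have "\<dots> \<le> B" unfolding B_def C1_def
    proof (intro mult_right_mono add_mono order_refl)
      show "sqrt (2 * \<tau> * D) \<le> sqrt (2 * T * D)" using \<tau>T D0 by (auto intro: mult_right_mono)
      show "c * sqrt (\<tau> / (2 * \<kappa>)) \<le> c * sqrt (T / (2 * \<kappa>))"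
        using \<tau>T kappa c0 by (auto intro!: mult_left_mono divide_right_mono)
      show "0 \<le> 1 + norm x0 + S\<sigma> + Sz" using S0 by simp
    qed
    finally show False using \<tau>R unfolding R_def by simp
  qed
  show ?thesis using solve[OF order_refl nR] xRc by blast
qed


lemma glob_uniq:
  fixes F :: "'z::euclidean_space \<Rightarrow> 'x::euclidean_space \<Rightarrow> 'x"
    and z :: "real \<Rightarrow> 'z" and \<sigma> x1 x2 :: "real \<Rightarrow> 'x"
  assumes lip: "loc_lipschitz (\<lambda>(z, x). F z x)" and zc: "continuous_on {0..} z"
    and g1: "is_global_solution (\<lambda>s v. F (z s) v) x0 \<sigma> x1"
    and g2: "is_global_solution (\<lambda>s v. F (z s) v) x0 \<sigma> x2"
    and t: "0 \<le> t"
  shows "x1 t = x2 t"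
proof (rule uniq[OF lip t])
  show "continuous_on {0..t} z" by (rule continuous_on_subset[OF zc]) auto
  show "continuous_on {0..t} x1" using g1 unfolding is_global_solution_def by (auto intro: continuous_on_subset)
  show "continuous_on {0..t} x2" using g2 unfolding is_global_solution_def by (auto intro: continuous_on_subset)
  show "\<forall>s\<in>{0..t}. x1 s = x0 + integral {0..s} (\<lambda>s. F (z s) (x1 s)) + \<sigma> s"
    using g1 unfolding is_global_solution_def by auto
  show "\<forall>s\<in>{0..t}. x2 s = x0 + integral {0..s} (\<lambda>s. F (z s) (x2 s)) + \<sigma> s"
    using g2 unfolding is_global_solution_def by auto
  show "t \<in> {0..t}" using t by auto
qed

lemma global_exist:
  fixes F :: "'z::euclidean_space \<Rightarrow> 'x::euclidean_space \<Rightarrow> 'x"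
    and \<kappa> D c :: real and z :: "real \<Rightarrow> 'z" and \<sigma> :: "real \<Rightarrow> 'x"
  assumes lip: "loc_lipschitz (\<lambda>(z, x). F z x)"
   and growth: "\<And>z x. norm (F z x) \<le> c * (1 + norm x + norm z)" and c0: "0 \<le> c"
   and kappa: "\<kappa> > 0" and D0: "0 \<le> D"
   and dissip: "\<And>z x y. inner (F z x - F z y) (x - y) \<le> D - \<kappa> * (norm (x - y))\<^sup>2"
   and zc: "continuous_on {0..} z" and sc: "continuous_on {0..} \<sigma>"
   and s0: "\<sigma> 0 = 0"
  shows "\<exists>x. is_global_solution (\<lambda>s v. F (z s) v) x0 \<sigma> x \<and>
             (\<forall>x'. is_global_solution (\<lambda>s v. F (z s) v) x0 \<sigma> x' \<longrightarrow> (\<forall>t\<ge>0. x' t = x t))"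
proof -
  have "\<forall>n::nat. \<exists>x. continuous_on {0..real n} x \<and> (\<forall>t\<in>{0..real n}. x t = x0 + integral {0..t} (\<lambda>s. F (z s) (x s)) + \<sigma> t)"
  proof
    fix n :: nat
    show "\<exists>x. continuous_on {0..real n} x \<and> (\<forall>t\<in>{0..real n}. x t = x0 + integral {0..t} (\<lambda>s. F (z s) (x s)) + \<sigma> t)"
    proof -
      have "continuous_on {0..real n} z" "continuous_on {0..real n} \<sigma>"
        by (auto intro: continuous_on_subset[OF zc] continuous_on_subset[OF sc])
      then show ?thesis
        using exist_T[OF lip growth c0 kappa D0 dissip, where T="real n" and z=z and \<sigma>=\<sigma>] s0 by simp
    qed
  qed
  then obtain X where Xc: "\<And>n. continuous_on {0..real n} (X n)"
    and Xe: "\<And>n. \<forall>t\<in>{0..real n}. X n t = x0 + integral {0..t} (\<lambda>s. F (z s) (X n s)) + \<sigma> t"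
    by metis
  have agree: "X n t = X m t" if "0 \<le> t" "t \<le> real n" "t \<le> real m" for n m t
  proof (rule uniq[OF lip that(1)])
    show "continuous_on {0..t} z" by (rule continuous_on_subset[OF zc]) auto
    show "continuous_on {0..t} (X n)" by (rule continuous_on_subset[OF Xc]) (use that in auto)
    show "continuous_on {0..t} (X m)" by (rule continuous_on_subset[OF Xc]) (use that in auto)
    show "\<forall>s\<in>{0..t}. X n s = x0 + integral {0..s} (\<lambda>s. F (z s) (X n s)) + \<sigma> s" using Xe[of n] that by auto
    show "\<forall>s\<in>{0..t}. X m s = x0 + integral {0..s} (\<lambda>s. F (z s) (X m s)) + \<sigma> s" using Xe[of m] that by auto
    show "t \<in> {0..t}" using that by auto
  qed
  define N where "N t = nat \<lceil>t\<rceil> + 1" for t :: real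
  have Nt: "t < real (N t)" for t unfolding N_def by linarith
  define x where "x t = X (N t) t" for t
  have xeq: "x t = X n t" if "0 \<le> t" "t \<le> real n" for n t
    unfolding x_def using agree[OF that(1) less_imp_le[OF Nt] that(2)] .
  have gs: "is_global_solution (\<lambda>s v. F (z s) v) x0 \<sigma> x"
    unfolding is_global_solution_def
  proof (intro conjI allI impI)
    show "continuous_on {0..} x"
      unfolding continuous_on_eq_continuous_within
    proof
      fix t :: real assume t: "t \<in> {0..}"
      define n where "n = N t"
      have tn: "t < real n" unfolding n_def by (rule Nt)
      have "continuous_on {0..real n} x"
        by (rule continuous_on_eq[OF Xc[of n]]) (auto simp: xeq)
      then have "continuous (at t within {0..real n}) x"
        using t tn by (auto simp: continuous_on_eq_continuous_within)
      moreover have "at t within {0..} = at t within {0..real n}"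
        by (rule at_within_nhd[where S="{..<real n}"]) (use tn in auto)
      ultimately show "continuous (at t within {0..}) x" by simp
    qed
  next
    fix t :: real assume t: "0 \<le> t"
    define n where "n = N t"
    have tn: "t < real n" unfolding n_def by (rule Nt)
    have eqs: "\<forall>s\<in>{0..t}. F (z s) (X n s) = F (z s) (x s)" using xeq[of _ n] tn by force
    have "(\<lambda>s. F (z s) (X n s)) integrable_on {0..t}"
      by (intro integrable_continuous_real F_cont_comp[OF lip] continuous_on_subset[OF zc]
            continuous_on_subset[OF Xc[of n]]) (use tn in auto)
    then show "(\<lambda>s. F (z s) (x s)) integrable_on {0..t}" by (rule integrable_eq) (use eqs in auto)
    have "x t = X n t" using xeq t tn by auto
    also have "\<dots> = x0 + integral {0..t} (\<lambda>s. F (z s) (X n s)) + \<sigma> t" using Xe[of n] t tn by auto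
    also have "integral {0..t} (\<lambda>s. F (z s) (X n s)) = integral {0..t} (\<lambda>s. F (z s) (x s))"
      by (rule integral_cong) (use eqs in auto)
    finally show "x t = x0 + integral {0..t} (\<lambda>s. F (z s) (x s)) + \<sigma> t" .
  qed
  show ?thesis
    using gs glob_uniq[OF lip zc _ gs] by blast
qed


lemma sup_norm_ge:
  fixes f :: "real \<Rightarrow> 'a::real_normed_vector"
  assumes "continuous_on {0..T} f" "t \<in> {0..T}"
  shows "norm (f t) \<le> sup_norm T f"
proof -
  have "compact ((\<lambda>t. norm (f t)) ` {0..T})"
    by (intro compact_continuous_image continuous_intros assms(1)) auto
  then have "bdd_above ((\<lambda>t. norm (f t)) ` {0..T})"
    by (intro bounded_imp_bdd_above compact_imp_bounded)
  then show ?thesis unfolding sup_norm_def by (rule cSUP_upper[OF assms(2)])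
qed

lemma sup_norm_le:
  fixes f :: "real \<Rightarrow> 'a::real_normed_vector"
  assumes "0 \<le> T" "\<And>t. t \<in> {0..T} \<Longrightarrow> norm (f t) \<le> B"
  shows "sup_norm T f \<le> B"
  unfolding sup_norm_def using assms by (intro cSUP_least) auto

lemma sup_norm_nonneg:
  fixes f :: "real \<Rightarrow> 'a::real_normed_vector"
  assumes "continuous_on {0..T} f" "0 \<le> T"
  shows "0 \<le> sup_norm T f"
proof -
  have "norm (f 0) \<le> sup_norm T f" using sup_norm_ge[OF assms(1), of 0] assms(2) by auto
  then show ?thesis using norm_ge_zero[of "f 0"] by linarith
qed

lemma hs_upper:
  fixes f :: "real \<Rightarrow> 'a::real_normed_vector"
  assumes h: "hoelder_on \<alpha> T f" and st: "s \<in> {0..T}" "t \<in> {0..T}" "s \<noteq> t"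
  shows "norm (f t - f s) / \<bar>t - s\<bar> powr \<alpha> \<le> hoelder_seminorm \<alpha> T f"
proof -
  obtain C where C: "\<forall>s\<in>{0..T}. \<forall>t\<in>{0..T}. norm (f t - f s) \<le> C * \<bar>t - s\<bar> powr \<alpha>"
    using h unfolding hoelder_on_def by blast
  let ?A = "{(s,t). s\<in>{0..T} \<and> t\<in>{0..T} \<and> s \<noteq> t}"
  let ?g = "\<lambda>st. norm (f (snd st) - f (fst st)) / \<bar>snd st - fst st\<bar> powr \<alpha>"
  have "bdd_above (?g ` ?A)"
  proof (rule bdd_aboveI2)
    fix st assume "st \<in> ?A"
    then obtain a b where ab: "st = (a, b)" "a \<in> {0..T}" "b \<in> {0..T}" "a \<noteq> b" by auto
    have "0 < \<bar>b - a\<bar> powr \<alpha>" using ab by simp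
    then show "?g st \<le> C" using C ab by (simp add: pos_divide_le_eq)
  qed
  moreover have "(s, t) \<in> ?A" using st by auto
  ultimately have "?g (s, t) \<le> Sup (?g ` ?A)" by (intro cSUP_upper)
  then show ?thesis unfolding hoelder_seminorm_def by simp
qed

lemma hs_nonneg:
  fixes f :: "real \<Rightarrow> 'a::real_normed_vector"
  assumes h: "hoelder_on \<alpha> T f" and T: "0 < T"
  shows "0 \<le> hoelder_seminorm \<alpha> T f"
proof -
  have "norm (f T - f 0) / \<bar>T - 0\<bar> powr \<alpha> \<le> hoelder_seminorm \<alpha> T f"
    by (rule hs_upper[OF h]) (use T in auto)
  moreover have "0 \<le> norm (f T - f 0) / \<bar>T - 0\<bar> powr \<alpha>" by simp
  ultimately show ?thesis by linarith
qed

lemma hs_least: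
  fixes f :: "real \<Rightarrow> 'a::real_normed_vector"
  assumes T: "0 < T"
    and b: "\<And>s t. s \<in> {0..T} \<Longrightarrow> t \<in> {0..T} \<Longrightarrow> s \<noteq> t \<Longrightarrow> norm (f t - f s) / \<bar>t - s\<bar> powr \<alpha> \<le> B"
  shows "hoelder_seminorm \<alpha> T f \<le> B"
  unfolding hoelder_seminorm_def
proof (rule cSUP_least)
  show "{(s,t). s\<in>{0..T} \<and> t\<in>{0..T} \<and> s \<noteq> t} \<noteq> {}" proof -
    have "(0, T) \<in> {(s,t). s\<in>{0..T} \<and> t\<in>{0..T} \<and> s \<noteq> t}" using T by auto
    then show ?thesis by blast
  qed
  fix st assume "st \<in> {(s,t). s\<in>{0..T} \<and> t\<in>{0..T} \<and> s \<noteq> t}"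
  then show "norm (f (snd st) - f (fst st)) / \<bar>snd st - fst st\<bar> powr \<alpha> \<le> B" using b by auto
qed

lemma supbound:
  fixes F :: "'z::euclidean_space \<Rightarrow> 'x::euclidean_space \<Rightarrow> 'x"
    and T \<kappa> D c :: real and z :: "real \<Rightarrow> 'z" and x \<sigma> :: "real \<Rightarrow> 'x"
  assumes lip: "loc_lipschitz (\<lambda>(z, x). F z x)"
   and growth: "\<And>z x. norm (F z x) \<le> c * (1 + norm x + norm z)" and c0: "0 \<le> c"
   and kappa: "\<kappa> > 0" and D0: "0 \<le> D"
   and dissip: "\<And>z x y. inner (F z x - F z y) (x - y) \<le> D - \<kappa> * (norm (x - y))\<^sup>2"
   and T: "0 \<le> T" and zc: "continuous_on {0..} z" and sc: "continuous_on {0..} \<sigma>"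
   and gs: "is_global_solution (\<lambda>s v. F (z s) v) x0 \<sigma> x"
  shows "sup_norm T x \<le> (1 + sqrt (2 * T * D) + c * sqrt (T / (2 * \<kappa>))) * (1 + norm x0 + sup_norm T \<sigma> + sup_norm T z)"
proof (rule sup_norm_le[OF T])
  have zc': "continuous_on {0..T} z" by (rule continuous_on_subset[OF zc]) auto
  have sc': "continuous_on {0..T} \<sigma>" by (rule continuous_on_subset[OF sc]) auto
  fix t assume t: "t \<in> {0..T}"
  show "norm (x t) \<le> (1 + sqrt (2 * T * D) + c * sqrt (T / (2 * \<kappa>))) * (1 + norm x0 + sup_norm T \<sigma> + sup_norm T z)"
  proof (rule apriori[OF lip growth c0 kappa D0 dissip T zc' _ sc' _ _ _ t])
    show "continuous_on {0..T} x" using gs unfolding is_global_solution_def by (auto intro: continuous_on_subset)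
    show "\<forall>t\<in>{0..T}. x t = x0 + integral {0..t} (\<lambda>s. F (z s) (x s)) + \<sigma> t"
      using gs unfolding is_global_solution_def by auto
    show "\<forall>s\<in>{0..T}. norm (\<sigma> s) \<le> sup_norm T \<sigma>" using sup_norm_ge[OF sc'] by auto
    show "\<forall>s\<in>{0..T}. norm (z s) \<le> sup_norm T z" using sup_norm_ge[OF zc'] by auto
  qed
qed


theorem lemma4p2:
  fixes F2 :: "'z::euclidean_space \<Rightarrow> 'x::euclidean_space \<Rightarrow> 'x"
    and \<kappa> D :: real
  assumes lip: "loc_lipschitz (\<lambda>(z, x). F2 z x)"
    and growth: "\<exists>c. \<forall>z x. norm (F2 z x) \<le> c * (1 + norm x + norm z)"
    and kappa_pos: "\<kappa> > 0" and D_pos: "D > 0"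
    and dissip: "\<And>z x y. inner (F2 z x - F2 z y) (x - y) \<le> D - \<kappa> * (norm (x - y))\<^sup>2"
  shows
    \<comment> \<open>(1a) existence and uniqueness of global solutions\<close>
    "(\<forall>(x0::'x) (\<sigma>::real \<Rightarrow> 'x) (z::real \<Rightarrow> 'z).
        continuous_on {0..} \<sigma> \<and> \<sigma> 0 = 0 \<and> continuous_on {0..} z \<longrightarrow>
        (\<exists>x. is_global_solution (\<lambda>s v. F2 (z s) v) x0 \<sigma> x \<and>
             (\<forall>x'. is_global_solution (\<lambda>s v. F2 (z s) v) x0 \<sigma> x' \<longrightarrow> (\<forall>t\<ge>0. x' t = x t))) \<and>
        (\<exists>y. is_global_solution (\<lambda>s v. - v) x0 \<sigma> y \<and>
             (\<forall>y'. is_global_solution (\<lambda>s v. - v) x0 \<sigma> y' \<longrightarrow> (\<forall>t\<ge>0. y' t = y t))))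
     \<and>
     \<comment> \<open>(1b) bounds on any finite interval [0,T], constants independent of x0, sigma, z\<close>
     (\<forall>T>0. \<exists>C. \<forall>(x0::'x) (\<sigma>::real \<Rightarrow> 'x) (z::real \<Rightarrow> 'z) x y.
        continuous_on {0..} \<sigma> \<and> \<sigma> 0 = 0 \<and> continuous_on {0..} z \<and>
        is_global_solution (\<lambda>s v. F2 (z s) v) x0 \<sigma> x \<and>
        is_global_solution (\<lambda>s v. - v) x0 \<sigma> y \<longrightarrow>
        (\<forall>t\<in>{0..T}. (norm (x t - y t))\<^sup>2 \<le>
            C * integral {0..t} (\<lambda>s. exp (- \<kappa> * (t - s)) * (1 + norm (y s) + norm (z s))\<^sup>2)) \<and>
        sup_norm T x \<le> C * (1 + norm x0 + sup_norm T \<sigma> + sup_norm T z))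
     \<and>
     \<comment> \<open>(2) Hoelder regularity\<close>
     (\<forall>T>0. \<forall>\<alpha>. 0 < \<alpha> \<and> \<alpha> \<le> 1 \<longrightarrow> (\<exists>C. \<forall>(x0::'x) (\<sigma>::real \<Rightarrow> 'x) (z::real \<Rightarrow> 'z) x.
        continuous_on {0..} \<sigma> \<and> \<sigma> 0 = 0 \<and> continuous_on {0..} z \<and>
        hoelder_on \<alpha> T \<sigma> \<and>
        is_global_solution (\<lambda>s v. F2 (z s) v) x0 \<sigma> x \<longrightarrow>
        hoelder_on \<alpha> T x \<and>
        hoelder_norm \<alpha> T x \<le> C * (1 + norm x0 + sup_norm T z + hoelder_norm \<alpha> T \<sigma>)))"
proof -
  obtain c where cg: "\<And>z x. norm (F2 z x) \<le> c * (1 + norm x + norm z)" using growth by blast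
  have c0: "0 \<le> c"
  proof -
    have "norm (F2 0 0) \<le> c * (1 + norm (0::'x) + norm (0::'z))" by (rule cg)
    then have "norm (F2 0 0) \<le> c" by simp
    then show ?thesis using norm_ge_zero[of "F2 0 0"] by linarith
  qed
  have D0: "0 \<le> D" using D_pos by simp
  have lipm: "loc_lipschitz (\<lambda>(z::'z, x::'x). - x)"
    unfolding loc_lipschitz_def
  proof
    fix p :: "'z \<times> 'x"
    have "1-lipschitz_on (cball p 1) (\<lambda>(z::'z, x::'x). - x)"
    proof (rule lipschitz_onI)
      fix a b :: "'z \<times> 'x"
      show "dist ((\<lambda>(z, x). - x) a) ((\<lambda>(z, x). - x) b) \<le> 1 * dist a b"
        using dist_snd_le[of a b] by (simp add: case_prod_beta dist_norm norm_minus_commute)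
    qed simp
    then show "\<exists>u>0. \<exists>L. L-lipschitz_on (cball p u) (\<lambda>(z::'z, x::'x). - x)" by (intro exI[of _ 1]) auto
  qed
  have gm: "\<And>(z::'z) (x::'x). norm (- x) \<le> 1 * (1 + norm x + norm z)" by simp
  have dm: "\<And>(z::'z) (x::'x) y. inner (- x - - y) (x - y) \<le> 1 - 1 * (norm (x - y))\<^sup>2"
  proof -
    fix x y :: 'x
    have "inner (- x - - y) (x - y) = - inner (x - y) (x - y)" by (simp add: inner_diff_left inner_diff_right)
    then show "inner (- x - - y) (x - y) \<le> 1 - 1 * (norm (x - y))\<^sup>2" by (simp add: power2_norm_eq_inner)
  qed
  have P1: "\<forall>(x0::'x) (\<sigma>::real \<Rightarrow> 'x) (z::real \<Rightarrow> 'z).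
        continuous_on {0..} \<sigma> \<and> \<sigma> 0 = 0 \<and> continuous_on {0..} z \<longrightarrow>
        (\<exists>x. is_global_solution (\<lambda>s v. F2 (z s) v) x0 \<sigma> x \<and>
             (\<forall>x'. is_global_solution (\<lambda>s v. F2 (z s) v) x0 \<sigma> x' \<longrightarrow> (\<forall>t\<ge>0. x' t = x t))) \<and>
        (\<exists>y. is_global_solution (\<lambda>s v. - v) x0 \<sigma> y \<and>
             (\<forall>y'. is_global_solution (\<lambda>s v. - v) x0 \<sigma> y' \<longrightarrow> (\<forall>t\<ge>0. y' t = y t)))"
  proof (intro allI impI conjI)
    fix x0 :: 'x and \<sigma> :: "real \<Rightarrow> 'x" and z :: "real \<Rightarrow> 'z"
    assume H: "continuous_on {0..} \<sigma> \<and> \<sigma> 0 = 0 \<and> continuous_on {0..} z"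
    then have sc: "continuous_on {0..} \<sigma>" and s0: "\<sigma> 0 = 0" and zc: "continuous_on {0..} z" by auto
    show "\<exists>x. is_global_solution (\<lambda>s v. F2 (z s) v) x0 \<sigma> x \<and>
             (\<forall>x'. is_global_solution (\<lambda>s v. F2 (z s) v) x0 \<sigma> x' \<longrightarrow> (\<forall>t\<ge>0. x' t = x t))"
      by (rule global_exist[OF lip cg c0 kappa_pos D0 dissip zc sc s0])
    have one: "(0::real) \<le> 1" "(0::real) < 1" by simp_all
    show "\<exists>y. is_global_solution (\<lambda>s v. - v) x0 \<sigma> y \<and>
             (\<forall>y'. is_global_solution (\<lambda>s v. - v) x0 \<sigma> y' \<longrightarrow> (\<forall>t\<ge>0. y' t = y t))"
      using global_exist[where F="\<lambda>(_::'z) (v::'x). - v", OF lipm gm one(1) one(2) one(1) dm zc sc s0] by simp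
  qed
  have P2: "\<forall>T>0. \<exists>C. \<forall>(x0::'x) (\<sigma>::real \<Rightarrow> 'x) (z::real \<Rightarrow> 'z) x y.
        continuous_on {0..} \<sigma> \<and> \<sigma> 0 = 0 \<and> continuous_on {0..} z \<and>
        is_global_solution (\<lambda>s v. F2 (z s) v) x0 \<sigma> x \<and>
        is_global_solution (\<lambda>s v. - v) x0 \<sigma> y \<longrightarrow>
        (\<forall>t\<in>{0..T}. (norm (x t - y t))\<^sup>2 \<le>
            C * integral {0..t} (\<lambda>s. exp (- \<kappa> * (t - s)) * (1 + norm (y s) + norm (z s))\<^sup>2)) \<and>
        sup_norm T x \<le> C * (1 + norm x0 + sup_norm T \<sigma> + sup_norm T z)"
  proof (intro allI impI)
    fix T :: real assume T: "0 < T"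
    define C1 where "C1 = 1 + sqrt (2 * T * D) + c * sqrt (T / (2 * \<kappa>))"
    define C2 where "C2 = 2 * D + (c + 1)\<^sup>2 / \<kappa>"
    have C20: "0 \<le> C2" unfolding C2_def using D0 kappa_pos by simp
    show "\<exists>C. \<forall>(x0::'x) (\<sigma>::real \<Rightarrow> 'x) (z::real \<Rightarrow> 'z) x y.
        continuous_on {0..} \<sigma> \<and> \<sigma> 0 = 0 \<and> continuous_on {0..} z \<and>
        is_global_solution (\<lambda>s v. F2 (z s) v) x0 \<sigma> x \<and>
        is_global_solution (\<lambda>s v. - v) x0 \<sigma> y \<longrightarrow>
        (\<forall>t\<in>{0..T}. (norm (x t - y t))\<^sup>2 \<le>
            C * integral {0..t} (\<lambda>s. exp (- \<kappa> * (t - s)) * (1 + norm (y s) + norm (z s))\<^sup>2)) \<and>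
        sup_norm T x \<le> C * (1 + norm x0 + sup_norm T \<sigma> + sup_norm T z)"
    proof (intro exI[of _ "max C1 C2"] allI impI conjI ballI)
      fix x0 :: 'x and \<sigma> :: "real \<Rightarrow> 'x" and z :: "real \<Rightarrow> 'z" and x y :: "real \<Rightarrow> 'x"
      assume H: "continuous_on {0..} \<sigma> \<and> \<sigma> 0 = 0 \<and> continuous_on {0..} z \<and>
        is_global_solution (\<lambda>s v. F2 (z s) v) x0 \<sigma> x \<and>
        is_global_solution (\<lambda>s v. - v) x0 \<sigma> y"
      then have sc: "continuous_on {0..} \<sigma>" and s0: "\<sigma> 0 = 0" and zc: "continuous_on {0..} z"
        and gx: "is_global_solution (\<lambda>s v. F2 (z s) v) x0 \<sigma> x"
        and gy: "is_global_solution (\<lambda>s v. - v) x0 \<sigma> y" by auto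
      have T0: "0 \<le> T" using T by simp
      have zc': "continuous_on {0..T} z" by (rule continuous_on_subset[OF zc]) auto
      have sc': "continuous_on {0..T} \<sigma>" by (rule continuous_on_subset[OF sc]) auto
      have xc: "continuous_on {0..T} x" using gx unfolding is_global_solution_def by (auto intro: continuous_on_subset)
      have yc: "continuous_on {0..T} y" using gy unfolding is_global_solution_def by (auto intro: continuous_on_subset)
      {
        fix t assume t: "t \<in> {0..T}"
        define g where "g s = F2 (z s) (x s) + y s" for s
        define h where "h s = 2 * D + (norm (F2 (z s) (y s) + y s))\<^sup>2 / \<kappa>" for s
        define Q where "Q s = 1 + norm (y s) + norm (z s)" for s
        have gc: "continuous_on {0..T} g" unfolding g_def by (intro continuous_intros F_cont_comp[OF lip zc' xc] yc)
        have hc: "continuous_on {0..T} h" unfolding h_def using kappa_pos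
          by (intro continuous_intros F_cont_comp[OF lip zc' yc] yc) auto
        have Qc: "continuous_on {0..T} Q" unfolding Q_def by (intro continuous_intros yc zc')
        have erep: "x s - y s = 0 + integral {0..s} g" if s: "s \<in> {0..T}" for s
        proof -
          have i1: "(\<lambda>s. F2 (z s) (x s)) integrable_on {0..s}" and ex: "x s = x0 + integral {0..s} (\<lambda>s. F2 (z s) (x s)) + \<sigma> s"
            using gx s unfolding is_global_solution_def by auto
          have i2: "(\<lambda>s. - y s) integrable_on {0..s}" and ey: "y s = x0 + integral {0..s} (\<lambda>s. - y s) + \<sigma> s"
            using gy s unfolding is_global_solution_def by auto
          have "x s - y s = integral {0..s} (\<lambda>s. F2 (z s) (x s)) - integral {0..s} (\<lambda>s. - y s)"
            using ex ey by (simp add: algebra_simps)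
          also have "\<dots> = integral {0..s} (\<lambda>r. F2 (z r) (x r) - - y r)" by (rule integral_diff[OF i1 i2, symmetric])
          finally show ?thesis unfolding g_def by simp
        qed
        have en: "exp (\<kappa> * t) * (norm (0 + integral {0..t} g))\<^sup>2 \<le> (norm (0::'x))\<^sup>2 + integral {0..t} (\<lambda>s. exp (\<kappa> * s) * h s)"
        proof (rule energy[OF T0 gc hc _ t])
          fix s assume s: "s \<in> {0..T}"
          define w where "w = x s - y s"
          define b where "b = norm (F2 (z s) (y s) + y s)"
          have "inner (g s) w = inner (F2 (z s) (x s) - F2 (z s) (y s)) (x s - y s) + inner (F2 (z s) (y s) + y s) w"
            unfolding g_def w_def by (simp add: inner_diff_left inner_add_left)
          also have "\<dots> \<le> D - \<kappa> * (norm w)\<^sup>2 + b * norm w"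
            using dissip[of "z s" "x s" "y s"] Cauchy_Schwarz_ineq2[of "F2 (z s) (y s) + y s" w]
            unfolding w_def b_def by linarith
          finally have 1: "2 * inner (g s) w \<le> 2 * D - 2 * \<kappa> * (norm w)\<^sup>2 + 2 * b * norm w" by simp
          have "2 * b * norm w \<le> \<kappa> * (norm w)\<^sup>2 + b\<^sup>2 / \<kappa>"
            by (rule young) (use kappa_pos in simp)
          with 1 have "2 * inner (g s) w \<le> - \<kappa> * (norm w)\<^sup>2 + h s" unfolding h_def b_def by simp
          then show "2 * inner (g s) (0 + integral {0..s} g) \<le> - \<kappa> * (norm (0 + integral {0..s} g))\<^sup>2 + h s"
            using erep[OF s] unfolding w_def by simp
        qed
        have w1: "(norm (x t - y t))\<^sup>2 \<le> exp (- \<kappa> * t) * integral {0..t} (\<lambda>s. exp (\<kappa> * s) * h s)"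
        proof -
          have "exp (\<kappa> * t) * (norm (x t - y t))\<^sup>2 \<le> integral {0..t} (\<lambda>s. exp (\<kappa> * s) * h s)"
            using en erep[OF t] by simp
          then have "exp (- \<kappa> * t) * (exp (\<kappa> * t) * (norm (x t - y t))\<^sup>2) \<le> exp (- \<kappa> * t) * integral {0..t} (\<lambda>s. exp (\<kappa> * s) * h s)"
            by (intro mult_left_mono) auto
          then show ?thesis by (simp add: exp_minus field_simps)
        qed
        have w2: "exp (- \<kappa> * t) * integral {0..t} (\<lambda>s. exp (\<kappa> * s) * h s) = integral {0..t} (\<lambda>s. exp (- \<kappa> * (t - s)) * h s)"
        proof -
          have "integral {0..t} (\<lambda>s. exp (- \<kappa> * (t - s)) * h s) = integral {0..t} (\<lambda>s. exp (- \<kappa> * t) * (exp (\<kappa> * s) * h s))"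
            by (rule integral_cong) (simp add: exp_add[symmetric] algebra_simps)
          then show ?thesis by simp
        qed
        have hQ: "h s \<le> C2 * (Q s)\<^sup>2" if s: "s \<in> {0..T}" for s
        proof -
          have Q1: "1 \<le> Q s" unfolding Q_def by simp
          have "norm (F2 (z s) (y s) + y s) \<le> c * (1 + norm (y s) + norm (z s)) + norm (y s)"
            using cg[of "z s" "y s"] norm_triangle_ineq[of "F2 (z s) (y s)" "y s"] by linarith
          also have "\<dots> \<le> (c + 1) * Q s" unfolding Q_def by (simp add: algebra_simps)
          finally have "(norm (F2 (z s) (y s) + y s))\<^sup>2 \<le> ((c + 1) * Q s)\<^sup>2" by (intro power_mono) auto
          then have 1: "(norm (F2 (z s) (y s) + y s))\<^sup>2 / \<kappa> \<le> (c + 1)\<^sup>2 / \<kappa> * (Q s)\<^sup>2"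
            using kappa_pos by (simp add: divide_right_mono power_mult_distrib)
          have "1 \<le> (Q s)\<^sup>2" using Q1 by (simp add: one_le_power)
          then have 2: "2 * D \<le> 2 * D * (Q s)\<^sup>2" using D0 by (simp add: mult_le_cancel_left1)
          show ?thesis unfolding h_def C2_def using 1 2 by (simp add: algebra_simps)
        qed
        have ekc: "continuous_on {0..T} (\<lambda>s. exp (- \<kappa> * (t - s)))" by (intro continuous_intros)
        have "integral {0..t} (\<lambda>s. exp (- \<kappa> * (t - s)) * h s) \<le> integral {0..t} (\<lambda>s. C2 * (exp (- \<kappa> * (t - s)) * (Q s)\<^sup>2))"
        proof (rule integral_le)
          show "(\<lambda>s. exp (- \<kappa> * (t - s)) * h s) integrable_on {0..t}"
            by (rule integrable_continuous_real, rule continuous_on_subset[of "{0..T}"])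
               (use t in \<open>auto intro!: continuous_intros hc\<close>)
          show "(\<lambda>s. C2 * (exp (- \<kappa> * (t - s)) * (Q s)\<^sup>2)) integrable_on {0..t}"
            by (rule integrable_continuous_real, rule continuous_on_subset[of "{0..T}"])
               (use t in \<open>auto intro!: continuous_intros Qc\<close>)
          fix s assume s: "s \<in> {0..t}"
          then have "s \<in> {0..T}" using t by auto
          from hQ[OF this] show "exp (- \<kappa> * (t - s)) * h s \<le> C2 * (exp (- \<kappa> * (t - s)) * (Q s)\<^sup>2)"
            by (simp add: mult_left_mono algebra_simps)
        qed
        also have "\<dots> = C2 * integral {0..t} (\<lambda>s. exp (- \<kappa> * (t - s)) * (Q s)\<^sup>2)" by simp
        also have "\<dots> \<le> max C1 C2 * integral {0..t} (\<lambda>s. exp (- \<kappa> * (t - s)) * (Q s)\<^sup>2)"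
        proof (rule mult_right_mono)
          show "C2 \<le> max C1 C2" by simp
          show "0 \<le> integral {0..t} (\<lambda>s. exp (- \<kappa> * (t - s)) * (Q s)\<^sup>2)"
            by (rule integral_nonneg, rule integrable_continuous_real, rule continuous_on_subset[of "{0..T}"])
               (use t in \<open>auto intro!: continuous_intros Qc\<close>)
        qed
        finally show "(norm (x t - y t))\<^sup>2 \<le> max C1 C2 * integral {0..t} (\<lambda>s. exp (- \<kappa> * (t - s)) * (1 + norm (y s) + norm (z s))\<^sup>2)"
          using w1 w2 unfolding Q_def by simp
      }
      have "sup_norm T x \<le> C1 * (1 + norm x0 + sup_norm T \<sigma> + sup_norm T z)"
        unfolding C1_def by (rule supbound[OF lip cg c0 kappa_pos D0 dissip T0 zc sc gx])
      also have "\<dots> \<le> max C1 C2 * (1 + norm x0 + sup_norm T \<sigma> + sup_norm T z)"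
        using sup_norm_nonneg[OF sc' T0] sup_norm_nonneg[OF zc' T0] by (intro mult_right_mono) auto
      finally show "sup_norm T x \<le> max C1 C2 * (1 + norm x0 + sup_norm T \<sigma> + sup_norm T z)" .
    qed
  qed
  have P3: "\<forall>T>0. \<forall>\<alpha>. 0 < \<alpha> \<and> \<alpha> \<le> 1 \<longrightarrow> (\<exists>C. \<forall>(x0::'x) (\<sigma>::real \<Rightarrow> 'x) (z::real \<Rightarrow> 'z) x.
        continuous_on {0..} \<sigma> \<and> \<sigma> 0 = 0 \<and> continuous_on {0..} z \<and>
        hoelder_on \<alpha> T \<sigma> \<and>
        is_global_solution (\<lambda>s v. F2 (z s) v) x0 \<sigma> x \<longrightarrow>
        hoelder_on \<alpha> T x \<and>
        hoelder_norm \<alpha> T x \<le> C * (1 + norm x0 + sup_norm T z + hoelder_norm \<alpha> T \<sigma>))"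
  proof (intro allI impI)
    fix T \<alpha> :: real assume T: "0 < T" and a: "0 < \<alpha> \<and> \<alpha> \<le> 1"
    have T0: "0 \<le> T" using T by simp
    define C1 where "C1 = 1 + sqrt (2 * T * D) + c * sqrt (T / (2 * \<kappa>))"
    have C10: "0 \<le> C1" unfolding C1_def using T D0 kappa_pos c0 by simp
    define K0 where "K0 = T powr (1 - \<alpha>)"
    have K00: "0 \<le> K0" unfolding K0_def by simp
    have dK: "\<bar>t - s\<bar> \<le> K0 * \<bar>t - s\<bar> powr \<alpha>" if "s \<in> {0..T}" "t \<in> {0..T}" for s t
    proof -
      have "\<bar>t - s\<bar> = \<bar>t - s\<bar> powr ((1 - \<alpha>) + \<alpha>)" by simp
      also have "\<dots> = \<bar>t - s\<bar> powr (1 - \<alpha>) * \<bar>t - s\<bar> powr \<alpha>" by (rule powr_add)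
      also have "\<dots> \<le> K0 * \<bar>t - s\<bar> powr \<alpha>"
        unfolding K0_def using that a by (intro mult_right_mono powr_mono2) auto
      finally show ?thesis .
    qed
    define C where "C = C1 + c * (1 + C1) * K0 + 1"
    show "\<exists>C. \<forall>(x0::'x) (\<sigma>::real \<Rightarrow> 'x) (z::real \<Rightarrow> 'z) x.
        continuous_on {0..} \<sigma> \<and> \<sigma> 0 = 0 \<and> continuous_on {0..} z \<and>
        hoelder_on \<alpha> T \<sigma> \<and>
        is_global_solution (\<lambda>s v. F2 (z s) v) x0 \<sigma> x \<longrightarrow>
        hoelder_on \<alpha> T x \<and>
        hoelder_norm \<alpha> T x \<le> C * (1 + norm x0 + sup_norm T z + hoelder_norm \<alpha> T \<sigma>)"
    proof (intro exI[of _ C] allI impI)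
      fix x0 :: 'x and \<sigma> :: "real \<Rightarrow> 'x" and z :: "real \<Rightarrow> 'z" and x :: "real \<Rightarrow> 'x"
      assume H: "continuous_on {0..} \<sigma> \<and> \<sigma> 0 = 0 \<and> continuous_on {0..} z \<and>
        hoelder_on \<alpha> T \<sigma> \<and> is_global_solution (\<lambda>s v. F2 (z s) v) x0 \<sigma> x"
      then have sc: "continuous_on {0..} \<sigma>" and zc: "continuous_on {0..} z"
        and h\<sigma>: "hoelder_on \<alpha> T \<sigma>" and gx: "is_global_solution (\<lambda>s v. F2 (z s) v) x0 \<sigma> x" by auto
      have zc': "continuous_on {0..T} z" by (rule continuous_on_subset[OF zc]) auto
      have sc': "continuous_on {0..T} \<sigma>" by (rule continuous_on_subset[OF sc]) auto
      have xc: "continuous_on {0..T} x" using gx unfolding is_global_solution_def by (auto intro: continuous_on_subset)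
      define S\<sigma> where "S\<sigma> = sup_norm T \<sigma>"
      define Sz where "Sz = sup_norm T z"
      define Sx where "Sx = sup_norm T x"
      define sm where "sm = hoelder_seminorm \<alpha> T \<sigma>"
      have S\<sigma>0: "0 \<le> S\<sigma>" unfolding S\<sigma>_def by (rule sup_norm_nonneg[OF sc' T0])
      have Sz0: "0 \<le> Sz" unfolding Sz_def by (rule sup_norm_nonneg[OF zc' T0])
      have Sx0: "0 \<le> Sx" unfolding Sx_def by (rule sup_norm_nonneg[OF xc T0])
      have sm0: "0 \<le> sm" unfolding sm_def by (rule hs_nonneg[OF h\<sigma> T])
      have Sxb: "Sx \<le> C1 * (1 + norm x0 + S\<sigma> + Sz)"
        unfolding Sx_def S\<sigma>_def Sz_def C1_def by (rule supbound[OF lip cg c0 kappa_pos D0 dissip T0 zc sc gx])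
      define M where "M = c * (1 + Sx + Sz)"
      have M0: "0 \<le> M" unfolding M_def using c0 Sx0 Sz0 by simp
      have FM: "norm (F2 (z s) (x s)) \<le> M" if s: "s \<in> {0..T}" for s
      proof -
        have "norm (x s) \<le> Sx" "norm (z s) \<le> Sz" unfolding Sx_def Sz_def
          using sup_norm_ge[OF xc s] sup_norm_ge[OF zc' s] by auto
        then have "c * (1 + norm (x s) + norm (z s)) \<le> M" unfolding M_def using c0
          by (intro mult_left_mono) auto
        then show ?thesis using cg[of "z s" "x s"] by linarith
      qed
      have key0: "norm (x t - x s) \<le> M * \<bar>t - s\<bar> + norm (\<sigma> t - \<sigma> s)"
        if st: "s \<in> {0..T}" "t \<in> {0..T}" "s \<le> t" for s t
      proof -
        have iF: "(\<lambda>r. F2 (z r) (x r)) integrable_on {0..t}" and ext: "x t = x0 + integral {0..t} (\<lambda>r. F2 (z r) (x r)) + \<sigma> t"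
          using gx st unfolding is_global_solution_def by auto
        have exs: "x s = x0 + integral {0..s} (\<lambda>r. F2 (z r) (x r)) + \<sigma> s"
          using gx st unfolding is_global_solution_def by auto
        have comb: "integral {0..s} (\<lambda>r. F2 (z r) (x r)) + integral {s..t} (\<lambda>r. F2 (z r) (x r)) = integral {0..t} (\<lambda>r. F2 (z r) (x r))"
          by (rule Henstock_Kurzweil_Integration.integral_combine[OF _ _ iF]) (use st in auto)
        have "x t - x s = integral {s..t} (\<lambda>r. F2 (z r) (x r)) + (\<sigma> t - \<sigma> s)"
          using ext exs comb by (simp add: algebra_simps)
        then have "norm (x t - x s) \<le> norm (integral {s..t} (\<lambda>r. F2 (z r) (x r))) + norm (\<sigma> t - \<sigma> s)"
          by (simp add: norm_triangle_ineq)
        moreover have "norm (integral {s..t} (\<lambda>r. F2 (z r) (x r))) \<le> integral {s..t} (\<lambda>r. M)"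
        proof (rule integral_norm_bound_integral)
          show "(\<lambda>r. F2 (z r) (x r)) integrable_on {s..t}"
            by (rule integrable_subinterval_real[OF iF]) (use st in auto)
          show "(\<lambda>r. M) integrable_on {s..t}" by (rule integrable_continuous_real) (intro continuous_intros)
          fix r assume "r \<in> {s..t}"
          then have "r \<in> {0..T}" using st by auto
          then show "norm (F2 (z r) (x r)) \<le> M" by (rule FM)
        qed
        moreover have "integral {s..t} (\<lambda>r. M) = M * \<bar>t - s\<bar>" using st by simp
        ultimately show ?thesis by linarith
      qed
      have key: "norm (x t - x s) \<le> M * K0 * \<bar>t - s\<bar> powr \<alpha> + norm (\<sigma> t - \<sigma> s)"
        if st: "s \<in> {0..T}" "t \<in> {0..T}" for s t
      proof -
        have "norm (x t - x s) \<le> M * \<bar>t - s\<bar> + norm (\<sigma> t - \<sigma> s)"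
        proof (cases "s \<le> t")
          case True then show ?thesis using key0[OF st] by simp
        next
          case False
          then have "norm (x s - x t) \<le> M * \<bar>s - t\<bar> + norm (\<sigma> s - \<sigma> t)" using key0[OF st(2) st(1)] by simp
          then show ?thesis by (simp add: norm_minus_commute abs_minus_commute)
        qed
        also have "M * \<bar>t - s\<bar> \<le> M * (K0 * \<bar>t - s\<bar> powr \<alpha>)" using dK[OF st] M0 by (rule mult_left_mono)
        finally show ?thesis by (simp add: mult.assoc)
      qed
      obtain C\<sigma> where C\<sigma>: "\<forall>s\<in>{0..T}. \<forall>t\<in>{0..T}. norm (\<sigma> t - \<sigma> s) \<le> C\<sigma> * \<bar>t - s\<bar> powr \<alpha>"
        using h\<sigma> unfolding hoelder_on_def by blast
      have hx: "hoelder_on \<alpha> T x"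
        unfolding hoelder_on_def
      proof (intro exI[of _ "M * K0 + C\<sigma>"] ballI)
        fix s t assume st: "s \<in> {0..T}" "t \<in> {0..T}"
        have "norm (x t - x s) \<le> M * K0 * \<bar>t - s\<bar> powr \<alpha> + C\<sigma> * \<bar>t - s\<bar> powr \<alpha>"
          using key[OF st] C\<sigma> st by fastforce
        then show "norm (x t - x s) \<le> (M * K0 + C\<sigma>) * \<bar>t - s\<bar> powr \<alpha>" by (simp add: algebra_simps)
      qed
      have smx: "hoelder_seminorm \<alpha> T x \<le> M * K0 + sm"
      proof (rule hs_least[OF T])
        fix s t assume st: "s \<in> {0..T}" "t \<in> {0..T}" "s \<noteq> t"
        have p: "0 < \<bar>t - s\<bar> powr \<alpha>" using st by simp
        have "norm (x t - x s) / \<bar>t - s\<bar> powr \<alpha> \<le> (M * K0 * \<bar>t - s\<bar> powr \<alpha> + norm (\<sigma> t - \<sigma> s)) / \<bar>t - s\<bar> powr \<alpha>"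
          using key[OF st(1,2)] p by (intro divide_right_mono) auto
        also have "\<dots> = M * K0 + norm (\<sigma> t - \<sigma> s) / \<bar>t - s\<bar> powr \<alpha>"
          using p by (simp add: add_divide_distrib)
        also have "norm (\<sigma> t - \<sigma> s) / \<bar>t - s\<bar> powr \<alpha> \<le> sm" unfolding sm_def by (rule hs_upper[OF h\<sigma> st])
        finally show "norm (x t - x s) / \<bar>t - s\<bar> powr \<alpha> \<le> M * K0 + sm" by simp
      qed
      define Q where "Q = 1 + norm x0 + Sz + (S\<sigma> + sm)"
      have Q1: "1 \<le> Q" unfolding Q_def using Sz0 S\<sigma>0 sm0 by simp
      have SxQ: "Sx \<le> C1 * Q"
      proof -
        have "C1 * (1 + norm x0 + S\<sigma> + Sz) \<le> C1 * Q" unfolding Q_def using C10 sm0 by (intro mult_left_mono) auto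
        then show ?thesis using Sxb by linarith
      qed
      have MQ: "M \<le> c * (1 + C1) * Q"
      proof -
        have "1 + Sz \<le> Q" unfolding Q_def using S\<sigma>0 sm0 norm_ge_zero[of x0] by simp
        moreover have "(1 + C1) * Q = Q + C1 * Q" by (simp add: algebra_simps)
        ultimately have "1 + Sx + Sz \<le> (1 + C1) * Q" using SxQ by linarith
        then show ?thesis unfolding M_def using c0 by (simp add: mult.assoc mult_left_mono)
      qed
      have "hoelder_norm \<alpha> T x = Sx + hoelder_seminorm \<alpha> T x" unfolding hoelder_norm_def Sx_def ..
      also have "\<dots> \<le> C1 * Q + (c * (1 + C1) * Q * K0 + Q)"
      proof (intro add_mono)
        show "Sx \<le> C1 * Q" by (rule SxQ)
        have "M * K0 \<le> c * (1 + C1) * Q * K0" using MQ K00 by (rule mult_right_mono)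
        moreover have "sm \<le> Q" unfolding Q_def using Sz0 S\<sigma>0 by simp
        ultimately show "hoelder_seminorm \<alpha> T x \<le> c * (1 + C1) * Q * K0 + Q" using smx by linarith
      qed
      also have "\<dots> = C * Q" unfolding C_def by (simp add: algebra_simps)
      also have "Q = 1 + norm x0 + sup_norm T z + hoelder_norm \<alpha> T \<sigma>"
        unfolding Q_def Sz_def S\<sigma>_def sm_def hoelder_norm_def ..
      finally show "hoelder_on \<alpha> T x \<and> hoelder_norm \<alpha> T x \<le> C * (1 + norm x0 + sup_norm T z + hoelder_norm \<alpha> T \<sigma>)"
        using hx by simp
    qed
  qed
  show ?thesis using P1 P2 P3 by blast
qed

end
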